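(* Let $P\subseteq\mathbb{R}^2$ be a convex polygon such that $\tau P=P^{\circ}$. Then $P$ has at least $6$ vertices.
   Context: $\tau:\mathbb{R}^2\to\mathbb{R}^2$ denotes the $90^\circ$ counterclockwise rotation. The polar of $P$ is $P^{\circ}=\{x\in\mathbb{R}^2: y^\top x\le 1\text{ for all }y\in P\}$. *)

theory Defs
  imports "HOL-Analysis.Analysis"
begin

definition rot90 :: "real^2 \<Rightarrow> real^2" where
  "rot90 x = (\<chi> i. if i = 1 then - (x $ 2) else x $ 1)"

definition polar_set :: "(real^2) set \<Rightarrow> (real^2) set" where
  "polar_set P = {x. \<forall>y\<in>P. y \<bullet> x \<le> 1}"

definition convex_polygon :: "(real^2) set \<Rightarrow> bool" where
  "convex_polygon P \<longleftrightarrow> polytope P \<and> interior P \<noteq> {}"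

definition vertices :: "(real^2) set \<Rightarrow> (real^2) set" where
  "vertices P = {v. v extreme_point_of P}"

end

theory Submission
  imports Defs
begin

lemma rot90_comp [simp]: "rot90 x $ 1 = - (x $ 2)" "rot90 x $ 2 = x $ 1"
  by (simp_all add: rot90_def)

lemma inner2: "(x::real^2) \<bullet> y = x$1 * y$1 + x$2 * y$2"
  by (simp add: inner_vec_def sum_2)

lemma rot90_antisym: "y \<bullet> rot90 x = - (x \<bullet> rot90 y)"
  by (simp add: inner2 algebra_simps)

lemma rot90_inj: "rot90 x = rot90 y \<Longrightarrow> x = y"
  by (simp add: vec_eq_iff forall_2)

lemma halfspace_hull:
  fixes w :: "real^2"
  assumes "\<And>v. v \<in> V \<Longrightarrow> w \<bullet> v \<le> 1" "z \<in> convex hull V"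
  shows "w \<bullet> z \<le> 1"
proof -
  have "convex hull V \<subseteq> {y. w \<bullet> y \<le> 1}"
    by (rule hull_minimal) (use assms(1) convex_halfspace_le in auto)
  then show ?thesis using assms(2) by auto
qed

theorem proposition5:
  fixes P :: "(real^2) set"
  assumes "convex_polygon P"
    and "rot90 ` P = polar_set P"
  shows "card (vertices P) \<ge> 6"
proof (rule ccontr)
  assume lt: "\<not> card (vertices P) \<ge> 6"
  define V where "V = vertices P"
  have poly: "polytope P" and int: "interior P \<noteq> {}"
    using assms(1) by (auto simp: convex_polygon_def)
  have finV: "finite V" unfolding V_def vertices_def
    by (simp add: finite_polyhedron_extreme_points poly polytope_imp_polyhedron)
  have PV: "P = convex hull V" unfolding V_def vertices_def
    using Krein_Milman_Minkowski poly polytope_imp_compact polytope_imp_convex by blast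
  have pol: "\<And>x y. x \<in> P \<Longrightarrow> y \<in> P \<Longrightarrow> y \<bullet> rot90 x \<le> 1"
    using assms(2) unfolding polar_set_def by blast
  have polI: "\<And>q. (\<forall>y\<in>P. y \<bullet> q \<le> 1) \<Longrightarrow> \<exists>z\<in>P. q = rot90 z"
    using assms(2) unfolding polar_set_def by blast
  have symP: "-x \<in> P" if "x \<in> P" for x
  proof -
    have "\<forall>y\<in>P. y \<bullet> rot90 (-x) \<le> 1"
    proof
      fix y assume "y \<in> P"
      have "y \<bullet> rot90 (-x) = x \<bullet> rot90 y"
        by (simp add: inner2 algebra_simps)
      then show "y \<bullet> rot90 (-x) \<le> 1" using pol[OF \<open>y \<in> P\<close> that] by simp
    qed
    then obtain z where "z \<in> P" "rot90 (-x) = rot90 z" using polI by blast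
    then show ?thesis using rot90_inj by metis
  qed
  have symV: "-v \<in> V" if "v \<in> V" for v
  proof -
    have vP: "v \<in> P" and ext: "\<forall>a\<in>P. \<forall>b\<in>P. v \<notin> open_segment a b"
      using that unfolding V_def vertices_def extreme_point_of_def by auto
    have "\<forall>a\<in>P. \<forall>b\<in>P. -v \<notin> open_segment a b"
    proof (intro ballI notI)
      fix a b assume "a \<in> P" "b \<in> P" "-v \<in> open_segment a b"
      then obtain u where "a \<noteq> b" "0 < u" "u < 1" "-v = (1 - u) *\<^sub>R a + u *\<^sub>R b"
        by (auto simp: in_segment)
      then have "v \<in> open_segment (-a) (-b)"
        unfolding in_segment by (auto intro!: exI[of _ u] simp: algebra_simps)
      then show False using ext symP \<open>a \<in> P\<close> \<open>b \<in> P\<close> by blast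
    qed
    then show ?thesis using symP[OF vP] unfolding V_def vertices_def extreme_point_of_def by auto
  qed
  have VP: "V \<subseteq> P" unfolding PV by (rule hull_subset)
  have neg0: "v = -v \<Longrightarrow> v = 0" for v :: "real^2"
    by (auto simp: vec_eq_iff forall_2)
  have nz: "v \<noteq> 0" if "v \<in> V" for v
  proof
    assume "v = 0"
    have "\<not> P \<subseteq> {0}"
    proof
      assume "P \<subseteq> {0}"
      then have "interior P \<subseteq> interior {0::real^2}" by (rule interior_mono)
      then show False using int by simp
    qed
    then obtain p where pP: "p \<in> P" and "p \<noteq> 0" by blast
    then have "p \<noteq> -p" using neg0 by blast
    then have "midpoint p (-p) \<in> open_segment p (-p)" by simp
    moreover have "midpoint p (-p) = 0" by (simp add: midpoint_def)
    ultimately have "v \<in> open_segment p (-p)" using \<open>v = 0\<close> by simp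
    moreover have "\<forall>a\<in>P. \<forall>b\<in>P. v \<notin> open_segment a b"
      using that unfolding V_def vertices_def extreme_point_of_def by blast
    ultimately show False using pP symP[OF pP] by blast
  qed
  have negne: "v \<noteq> -v" if "v \<in> V" for v
    using nz[OF that] neg0 by blast
  have "V \<noteq> {}"
  proof
    assume "V = {}"
    then have "P = {}" using PV by simp
    then show False using int by simp
  qed
  then obtain a where aV: "a \<in> V" by blast
  have card_lt: "card V < 6" using lt V_def by simp
  obtain b where Vab: "V = {a, -a, b, -b}"
  proof (cases "V - {a, -a} = {}")
    case True
    then have "V = {a, -a, a, -a}" using aV symV by blast
    then show ?thesis using that by blast
  next
    case False
    define V1 where "V1 = V - {a, -a}"
    have c1: "card V1 = card V - 2" unfolding V1_def
      using card_Diff_subset[of "{a,-a}" V] aV symV[OF aV] negne[OF aV] by simp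
    obtain b where bV1: "b \<in> V1" using False V1_def by blast
    have bV: "b \<in> V" using bV1 V1_def by blast
    have mbV1: "-b \<in> V1" using bV1 symV[OF bV] unfolding V1_def by auto
    define V2 where "V2 = V1 - {b, -b}"
    have finV1: "finite V1" using finV V1_def by simp
    have c2: "card V2 = card V1 - 2" unfolding V2_def
      using card_Diff_subset[of "{b,-b}" V1] bV1 mbV1 negne[OF bV] finV1 by simp
    have "V2 = {}"
    proof (rule ccontr)
      assume "V2 \<noteq> {}"
      then obtain c where cV2: "c \<in> V2" by blast
      have cV: "c \<in> V" using cV2 V2_def V1_def by blast
      have "-c \<in> V2" using cV2 symV[OF cV] unfolding V2_def V1_def by auto
      then have "{c, -c} \<subseteq> V2" using cV2 by blast
      moreover have "finite V2" using finV1 V2_def by simp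
      ultimately have "card {c, -c} \<le> card V2" by (rule card_mono[rotated])
      then have "2 \<le> card V2" using negne[OF cV] by simp
      then show False using c1 c2 card_lt by linarith
    qed
    then have "V = {a, -a, b, -b}" using V1_def V2_def aV symV[OF aV] bV1 mbV1 by blast
    then show ?thesis using that by blast
  qed
  have aP: "a \<in> P" and bP: "b \<in> P" and maP: "-a \<in> P" using VP Vab by auto
  define c where "c = a \<bullet> rot90 b"
  have c1: "c \<le> 1" using pol[OF bP aP] c_def by simp
  have c2: "- c \<le> 1" using pol[OF bP maP] c_def by simp
  show False
  proof (cases "c = 0")
    case True
    define w where "w = rot90 a"
    have "w \<noteq> 0" using nz[OF aV] unfolding w_def by (auto simp: vec_eq_iff forall_2)
    have "\<forall>v\<in>V. w \<bullet> v = 0" using True unfolding Vab w_def c_def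
      by (auto simp: inner2 algebra_simps)
    then have "P \<subseteq> {y. w \<bullet> y = 0}" unfolding PV
      by (intro hull_minimal) (auto simp: convex_hyperplane)
    then have "interior P \<subseteq> interior {y. w \<bullet> y = 0}" by (rule interior_mono)
    then show False using int \<open>w \<noteq> 0\<close> by simp
  next
    case False
    define D where "D = a$1 * b$2 - a$2 * b$1"
    have "D \<noteq> 0" using False unfolding D_def c_def by (auto simp: inner2 algebra_simps)
    define x :: "real^2" where "x = (\<chi> i. if i = 1 then (b$2 - a$2) / D else (a$1 - b$1) / D)"
    have x1: "x$1 = (b$2 - a$2) / D" and x2: "x$2 = (a$1 - b$1) / D" unfolding x_def by simp_all
    have "a \<bullet> x = (a$1 * (b$2 - a$2) + a$2 * (a$1 - b$1)) / D"
      unfolding inner2 x1 x2 by (simp add: add_divide_distrib)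
    also have "a$1 * (b$2 - a$2) + a$2 * (a$1 - b$1) = D" unfolding D_def by (simp add: algebra_simps)
    finally have ax: "a \<bullet> x = 1" using \<open>D \<noteq> 0\<close> by simp
    have "b \<bullet> x = (b$1 * (b$2 - a$2) + b$2 * (a$1 - b$1)) / D"
      unfolding inner2 x1 x2 by (simp add: add_divide_distrib)
    also have "b$1 * (b$2 - a$2) + b$2 * (a$1 - b$1) = D" unfolding D_def by (simp add: algebra_simps)
    finally have bx: "b \<bullet> x = 1" using \<open>D \<noteq> 0\<close> by simp
    have "\<forall>y\<in>P. y \<bullet> x \<le> 1"
    proof
      fix y assume "y \<in> P"
      have "x \<bullet> y \<le> 1"
        by (rule halfspace_hull[of V]) (use ax bx \<open>y \<in> P\<close> PV in \<open>auto simp: Vab inner_commute\<close>)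
      then show "y \<bullet> x \<le> 1" by (simp add: inner_commute)
    qed
    then obtain z where zP: "z \<in> P" and xz: "x = rot90 z" using polI by blast
    define u where "u = - rot90 (a + b)"
    have hu: "u \<bullet> y = (a + b) \<bullet> rot90 y" for y
      unfolding u_def by (simp add: inner2 algebra_simps)
    have "u \<bullet> z \<le> 1"
    proof (rule halfspace_hull[of V])
      fix v assume "v \<in> V"
      then show "u \<bullet> v \<le> 1" using c1 c2 unfolding Vab hu c_def
        by (auto simp: inner2 algebra_simps)
    qed (use zP PV in auto)
    moreover have "u \<bullet> z = 2" unfolding hu xz[symmetric] using ax bx
      by (simp add: inner_add_left)
    ultimately show False by simp
  qed
qed

end
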